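(* Let $v, v'$ be pure (index-free) $\lambda$-terms. The following are equivalent: (1) there is a top-level term $t$ such that $v \mapsto^* t$ in the indexed small-step head-reduction semantics, $t$ is irreducible there (there is no $t'$ with $t \mapsto t'$), and $t \hookrightarrow^* v'$ by the indexed readback relation; (2) there is a command $c$ of the projection-based head-reduction machine such that $\langle v \,\|\, \mathsf{tp}\rangle \to^* c$, $c$ is irreducible in that machine (there is no $c'$ with $c \to c'$), and $c \hookrightarrow^* v'$ by the machine's readback relation. Here $\to^*$, $\mapsto^*$ and $\hookrightarrow^*$ denote reflexive–transitive closures.
   Context: Pure $\lambda$-terms: $v ::= x \mid v\,v \mid \lambda x.v$; substitution $v[v'/x]$ is capture-avoiding. Indexed small-step semantics. Indices $i ::= \mathrm{zero} \mid \mathrm{succ}(i)$. Terms $v ::= x \mid v\,v \mid \lambda x.v \mid i$. Top-level terms $t ::= v \mid \lambda.t$ (a variable-free binder usable only at top level). Evaluation contexts $E ::= \Box \mid E\,v$. Top-level contexts $S ::= \Box \mid \lambda.S$. $\mathrm{Count}(\Box)=\mathrm{zero}$, $\mathrm{Count}(\lambda.S)=\mathrm{succ}(\mathrm{Count}(S))$. Reduction rules: $S[E[(\lambda x.v)\,v']] \mapsto S[E[v[v'/x]]]$ and $S[\lambda x.v] \mapsto S[\lambda.v[\mathrm{Count}(S)/x]]$. Readback rule: $S[\lambda.v] \hookrightarrow S[\lambda x.v[x/\mathrm{Count}(S)]]$, where $x$ is fresh and $v[x/i]$ replaces every occurrence of the index $i$ in $v$ by $x$. A top-level term $S[v]$ is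 legal iff every index $i$ occurring in $v$ satisfies $i < \mathrm{Count}(S)$; only legal top-level terms are considered. Projection-based head-reduction machine. Commands $c ::= \langle v \,\|\, E\rangle$; terms $v ::= x \mid v\,v \mid \lambda x.v \mid \mathsf{car}(S)$; co-terms $E ::= v\cdot E \mid S$; stuck co-terms $S ::= \mathsf{tp} \mid \mathsf{cdr}(S)$. Rules: $\langle v\,v' \,\|\, E\rangle \to \langle v \,\|\, v'\cdot E\rangle$; $\langle \lambda x.v \,\|\, v'\cdot E\rangle \to \langle v[v'/x] \,\|\, E\rangle$; $\langle \lambda x.v \,\|\, S\rangle \to \langle v[\mathsf{car}(S)/x] \,\|\, \mathsf{cdr}(S)\rangle$. Readback rules: $\langle v \,\|\, v'\cdot E\rangle \hookrightarrow \langle v\,v' \,\|\, E\rangle$; $\langle v \,\|\, \mathsf{tp}\rangle \hookrightarrow v$; $\langle v \,\|\, \mathsf{cdr}(S)\rangle \hookrightarrow \langle \lambda x.v[x/\mathsf{car}(S)] \,\|\, S\rangle$ with $x$ fresh, where $v[x/\mathsf{car}(S)]$ replaces every occurrence of $\mathsf{car}(S)$ in $v$ by $x$. Writing $\mathsf{cdr}^n$ for $n$ applications of $\mathsf{cdr}$, set $\mathsf{cdr}^n(\mathsf{tp}) < \mathsf{cdr}^m(\mathsf{tp})$ iff $n<m$. A command $\langle v_1 \,\|\, v_2\cdots v_n\cdot S\rangle$ is legal iff for every $\mathsf{car}(S')$ occurring in any $v_i$, $S' < S$; only legal commands are considered. *)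

theory Defs
  imports Main
begin

section \<open>Pure lambda terms (de Bruijn representation, i.e. modulo alpha)\<close>

datatype lam = LVar nat | LApp lam lam | LLam lam

text \<open>'c tm: de Bruijn lambda terms with an extra kind of atom Cst.
  For the indexed semantics 'c = nat (Cst i is the index i = succ^i(zero)).
  For the machine 'c = stuck (Cst S is car(S)).\<close>

datatype 'c tm = Var nat | App "'c tm" "'c tm" | Lam "'c tm" | Cst 'c

fun emb :: "lam \<Rightarrow> 'c tm" where
  "emb (LVar n) = Var n"
| "emb (LApp a b) = App (emb a) (emb b)"
| "emb (LLam a) = Lam (emb a)"

fun csts :: "'c tm \<Rightarrow> 'c set" where
  "csts (Var n) = {}"
| "csts (App a b) = csts a \<union> csts b"
| "csts (Lam a) = csts a"
| "csts (Cst c) = {c}"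

fun lift :: "nat \<Rightarrow> 'c tm \<Rightarrow> 'c tm" where
  "lift k (Var i) = Var (if i < k then i else Suc i)"
| "lift k (App a b) = App (lift k a) (lift k b)"
| "lift k (Lam a) = Lam (lift (Suc k) a)"
| "lift k (Cst c) = Cst c"

text \<open>Capture-avoiding substitution of s for bound variable k (lowering the others).
  subst b 0 a is the term b[a/x] for a redex (\<lambda>x.b) a.\<close>
fun subst :: "'c tm \<Rightarrow> nat \<Rightarrow> 'c tm \<Rightarrow> 'c tm" where
  "subst (Var i) k s = (if i < k then Var i else if i = k then s else Var (i - 1))"
| "subst (App a b) k s = App (subst a k s) (subst b k s)"
| "subst (Lam a) k s = Lam (subst a (Suc k) (lift 0 s))"
| "subst (Cst c) k s = Cst c"

text \<open>abstr c k v: replace every occurrence of the constant c by a fresh variable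
  bound at depth k (shifting free variables). Lam (abstr c 0 v) is \<lambda>x. v[x/c].\<close>
fun abstr :: "'c \<Rightarrow> nat \<Rightarrow> 'c tm \<Rightarrow> 'c tm" where
  "abstr c k (Var i) = Var (if i < k then i else Suc i)"
| "abstr c k (App a b) = App (abstr c k a) (abstr c k b)"
| "abstr c k (Lam a) = Lam (abstr c (Suc k) a)"
| "abstr c k (Cst d) = (if d = c then Var k else Cst d)"

datatype top = Body "nat tm" | TLam top

text \<open>Top-level context S with Count(S) = n, plugged with t.\<close>
definition plugS :: "nat \<Rightarrow> top \<Rightarrow> top" where
  "plugS n t = (TLam ^^ n) t"

text \<open>Evaluation contexts E ::= \<box> | E v, as the list of arguments.\<close>
definition plugE :: "'c tm \<Rightarrow> 'c tm list \<Rightarrow> 'c tm" where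
  "plugE r es = foldl App r es"

fun top_count :: "top \<Rightarrow> nat" where
  "top_count (Body v) = 0"
| "top_count (TLam t) = Suc (top_count t)"

fun top_body :: "top \<Rightarrow> nat tm" where
  "top_body (Body v) = v"
| "top_body (TLam t) = top_body t"

definition legal_top :: "top \<Rightarrow> bool" where
  "legal_top t \<longleftrightarrow> (\<forall>i \<in> csts (top_body t). i < top_count t)"

inductive istep :: "top \<Rightarrow> top \<Rightarrow> bool" where
  beta: "legal_top (plugS n (Body (plugE (App (Lam b) a) es))) \<Longrightarrow>
     istep (plugS n (Body (plugE (App (Lam b) a) es))) (plugS n (Body (plugE (subst b 0 a) es)))"
| lam: "legal_top (plugS n (Body (Lam b))) \<Longrightarrow>
     istep (plugS n (Body (Lam b))) (plugS n (TLam (Body (subst b 0 (Cst n)))))"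

inductive irb :: "top \<Rightarrow> top \<Rightarrow> bool" where
  "legal_top (plugS n (TLam (Body v))) \<Longrightarrow>
     irb (plugS n (TLam (Body v))) (plugS n (Body (Lam (abstr n 0 v))))"

datatype stuck = Tp | Cdr stuck

fun depth :: "stuck \<Rightarrow> nat" where
  "depth Tp = 0"
| "depth (Cdr s) = Suc (depth s)"

definition stuck_less :: "stuck \<Rightarrow> stuck \<Rightarrow> bool" where
  "stuck_less s s' \<longleftrightarrow> depth s < depth s'"

text \<open>Terms of the machine: stuck tm, where Cst S stands for car(S).
  Co-terms E ::= v . E | S.\<close>
datatype coterm = Push "stuck tm" coterm | Stk stuck

datatype cmd = Cmd "stuck tm" coterm

fun co_stk :: "coterm \<Rightarrow> stuck" where
  "co_stk (Push v e) = co_stk e"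
| "co_stk (Stk s) = s"

fun co_args :: "coterm \<Rightarrow> stuck tm list" where
  "co_args (Push v e) = v # co_args e"
| "co_args (Stk s) = []"

fun legal_cmd :: "cmd \<Rightarrow> bool" where
  "legal_cmd (Cmd v e) \<longleftrightarrow>
     (\<forall>u \<in> set (v # co_args e). \<forall>s \<in> csts u. stuck_less s (co_stk e))"

inductive mstep :: "cmd \<Rightarrow> cmd \<Rightarrow> bool" where
  push: "legal_cmd (Cmd (App v v') e) \<Longrightarrow> mstep (Cmd (App v v') e) (Cmd v (Push v' e))"
| beta: "legal_cmd (Cmd (Lam b) (Push v' e)) \<Longrightarrow> mstep (Cmd (Lam b) (Push v' e)) (Cmd (subst b 0 v') e)"
| proj: "legal_cmd (Cmd (Lam b) (Stk s)) \<Longrightarrow>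
     mstep (Cmd (Lam b) (Stk s)) (Cmd (subst b 0 (Cst s)) (Stk (Cdr s)))"

datatype mstate = MCmd cmd | MTerm "stuck tm"

inductive mrb :: "mstate \<Rightarrow> mstate \<Rightarrow> bool" where
  app: "legal_cmd (Cmd v (Push v' e)) \<Longrightarrow> mrb (MCmd (Cmd v (Push v' e))) (MCmd (Cmd (App v v') e))"
| tp: "legal_cmd (Cmd v (Stk Tp)) \<Longrightarrow> mrb (MCmd (Cmd v (Stk Tp))) (MTerm v)"
| cdr: "legal_cmd (Cmd v (Stk (Cdr s))) \<Longrightarrow>
     mrb (MCmd (Cmd v (Stk (Cdr s)))) (MCmd (Cmd (Lam (abstr s 0 v)) (Stk s)))"

end

theory Submission
  imports Defs
begin

definition notApp :: "'c tm \<Rightarrow> bool" where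
  "notApp x \<longleftrightarrow> (\<forall>a b. x \<noteq> App a b)"

lemma map_lift: "map_tm f (lift k x) = lift k (map_tm f x)"
  by (induction x arbitrary: k) auto

lemma map_subst: "map_tm f (subst b k a) = subst (map_tm f b) k (map_tm f a)"
  by (induction b arbitrary: k a) (auto simp: map_lift)

lemma map_abstr: "inj f \<Longrightarrow> map_tm f (abstr c k v) = abstr (f c) k (map_tm f v)"
  by (induction v arbitrary: k) (auto simp: inj_eq)

lemma plugE_Nil[simp]: "plugE r [] = r" by (simp add: plugE_def)
lemma plugE_Cons[simp]: "plugE r (x#xs) = plugE (App r x) xs" by (simp add: plugE_def)
lemma plugE_snoc[simp]: "plugE r (xs@[x]) = App (plugE r xs) x" by (simp add: plugE_def)

lemma map_plugE: "map_tm f (plugE r es) = plugE (map_tm f r) (map (map_tm f) es)"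
  by (induction es arbitrary: r) auto

lemma csts_lift[simp]: "csts (lift k a) = csts a"
  by (induction a arbitrary: k) auto

lemma csts_subst: "csts (subst b k a) \<subseteq> csts b \<union> csts a"
proof (induction b arbitrary: k a)
  case (App b1 b2) then show ?case by simp blast
next
  case (Lam b) then show ?case using Lam.IH[of "Suc k" "lift 0 a"] by simp
qed auto

lemma csts_abstr[simp]: "csts (abstr c k v) = csts v - {c}"
  by (induction v arbitrary: k) auto

lemma csts_map[simp]: "csts (map_tm f x) = f ` csts x"
  by (induction x) auto

lemma csts_plugE[simp]: "csts (plugE r es) = csts r \<union> (\<Union>u\<in>set es. csts u)"
  by (induction es arbitrary: r) auto

lemma map_emb[simp]: "map_tm f (emb v) = emb v"
  by (induction v) auto

lemma csts_emb[simp]: "csts (emb v) = {}"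
  by (induction v) auto

lemma inj_depth: "inj depth"
proof -
  have "depth s = depth s' \<Longrightarrow> s = s'" for s s'
    by (induction s arbitrary: s'; case_tac s'; auto)
  then show ?thesis by (auto intro: injI)
qed

lemma top_count_plugS[simp]: "top_count (plugS n t) = n + top_count t"
  by (induction n) (auto simp: plugS_def)
lemma top_body_plugS[simp]: "top_body (plugS n t) = top_body t"
  by (induction n) (auto simp: plugS_def)
lemma plugS_0[simp]: "plugS 0 t = t" by (simp add: plugS_def)
lemma plugS_Suc: "plugS (Suc n) t = plugS n (TLam t)"
  by (simp add: plugS_def funpow_Suc_right del: funpow.simps)

lemma plugS_Body_inj:
  "plugS n (Body x) = plugS m (Body y) \<Longrightarrow> n = m \<and> x = y"
  by (metis add.right_neutral top_body.simps(1) top_body_plugS top_count.simps(1) top_count_plugS)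

lemma plugE_inj:
  "notApp x \<Longrightarrow> notApp y \<Longrightarrow> plugE x xs = plugE y ys \<Longrightarrow> x = y \<and> xs = ys"
proof (induction xs arbitrary: ys rule: rev_induct)
  case Nil
  then show ?case by (cases ys rule: rev_exhaust) (auto simp: notApp_def)
next
  case (snoc z zs)
  then show ?case by (cases ys rule: rev_exhaust) (auto simp: notApp_def)
qed

lemma notApp_map: "notApp r \<Longrightarrow> notApp (map_tm f r)"
  by (cases r) (auto simp: notApp_def)

fun phi :: "cmd \<Rightarrow> top" where
  "phi (Cmd r e) = plugS (depth (co_stk e)) (Body (map_tm depth (plugE r (co_args e))))"

fun psi :: "mstate \<Rightarrow> top" where
  "psi (MCmd c) = phi c"
| "psi (MTerm v) = Body (map_tm depth v)"

lemma legal_phi: "legal_cmd c \<Longrightarrow> legal_top (phi c)"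
  by (cases c) (auto simp: legal_top_def stuck_less_def)

lemma legal_step: "mstep c d \<Longrightarrow> legal_cmd d"
proof (induction rule: mstep.induct)
  case (push v v' e) then show ?case by auto
next
  case (beta b v' e) then show ?case using csts_subst by fastforce
next
  case (proj b s) then show ?case using csts_subst[of b 0 "Cst s"]
    by (auto simp: stuck_less_def) (fastforce)
qed

lemma A0: "mstep c d \<Longrightarrow> (\<exists>a b e. c = Cmd (App a b) e \<and> phi d = phi c) \<or> istep (phi c) (phi d)"
proof (induction rule: mstep.induct)
  case (push v v' e) then show ?case by simp
next
  case (beta b v' e)
  have L: "legal_top (phi (Cmd (Lam b) (Push v' e)))" using legal_phi beta by blast
  show ?case using istep.beta[of "depth (co_stk e)" "map_tm depth b" "map_tm depth v'"
      "map (map_tm depth) (co_args e)"] L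
    by (simp add: map_plugE map_subst)
next
  case (proj b s)
  have L: "legal_top (phi (Cmd (Lam b) (Stk s)))" using legal_phi proj by blast
  show ?case using istep.lam[of "depth s" "map_tm depth b"] L
    by (simp add: map_subst plugS_Suc)
qed

lemma A2: "mstep (Cmd r e) d \<Longrightarrow> notApp r \<Longrightarrow> istep (phi (Cmd r e)) (phi d)"
  using A0[of "Cmd r e" d] by (auto simp: notApp_def)

lemma A1: "mstep c d \<Longrightarrow> phi d = phi c \<or> istep (phi c) (phi d)"
  using A0 by blast

lemma Norm: "legal_cmd (Cmd r e) \<Longrightarrow> \<exists>r' e'. mstep\<^sup>*\<^sup>* (Cmd r e) (Cmd r' e') \<and>
   phi (Cmd r' e') = phi (Cmd r e) \<and> legal_cmd (Cmd r' e') \<and> notApp r'"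
proof (induction r arbitrary: e)
  case (App r1 r2)
  have s: "mstep (Cmd (App r1 r2) e) (Cmd r1 (Push r2 e))" using App.prems by (rule mstep.push)
  have "legal_cmd (Cmd r1 (Push r2 e))" using legal_step[OF s] .
  from App.IH(1)[OF this] obtain r' e' where
    "mstep\<^sup>*\<^sup>* (Cmd r1 (Push r2 e)) (Cmd r' e')" "phi (Cmd r' e') = phi (Cmd r1 (Push r2 e))"
    "legal_cmd (Cmd r' e')" "notApp r'" by blast
  then show ?case using s by (intro exI[of _ r'] exI[of _ e']) (auto intro: converse_rtranclp_into_rtranclp)
next
  case (Var x) show ?case using Var.prems by (intro exI[of _ "Var x"] exI[of _ e]) (simp add: notApp_def)
next
  case (Lam x) show ?case using Lam.prems by (intro exI[of _ "Lam x"] exI[of _ e]) (simp add: notApp_def)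
next
  case (Cst x) show ?case using Cst.prems by (intro exI[of _ "Cst x"] exI[of _ e]) (simp add: notApp_def)
qed

lemma Inv: "legal_cmd (Cmd r e) \<Longrightarrow> notApp r \<Longrightarrow> istep (phi (Cmd r e)) y \<Longrightarrow>
   \<exists>c'. mstep (Cmd r e) c' \<and> phi c' = y"
proof (cases rule: istep.cases, assumption)
  fix n b a es
  assume L: "legal_cmd (Cmd r e)" and nA: "notApp r"
    and eq: "phi (Cmd r e) = plugS n (Body (plugE (App (Lam b) a) es))"
    and y: "y = plugS n (Body (plugE (subst b 0 a) es))"
  from eq have "plugS (depth (co_stk e)) (Body (map_tm depth (plugE r (co_args e)))) = plugS n (Body (plugE (App (Lam b) a) es))" by simp
  from plugS_Body_inj[OF this] have n: "n = depth (co_stk e)"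
    and e2: "plugE (Lam b) (a # es) = plugE (map_tm depth r) (map (map_tm depth) (co_args e))"
    by (auto simp: map_plugE)
  from plugE_inj[OF _ notApp_map[OF nA] e2] have
    h1: "Lam b = map_tm depth r" and h2: "a # es = map (map_tm depth) (co_args e)"
    by (auto simp: notApp_def)
  from h1 obtain b0 where r: "r = Lam b0" and b: "b = map_tm depth b0" by (cases r) auto
  from h2 obtain a0 e0 where e: "e = Push a0 e0" and a: "a = map_tm depth a0"
      and es: "es = map (map_tm depth) (co_args e0)"
    by (cases e) auto
  have "mstep (Cmd r e) (Cmd (subst b0 0 a0) e0)" using L unfolding r e by (rule mstep.beta)
  moreover have "phi (Cmd (subst b0 0 a0) e0) = y"
    using y n unfolding e by (simp add: map_plugE map_subst a b es)
  ultimately show ?thesis by blast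
next
  fix n b
  assume L: "legal_cmd (Cmd r e)" and nA: "notApp r"
    and eq: "phi (Cmd r e) = plugS n (Body (Lam b))"
    and y: "y = plugS n (TLam (Body (subst b 0 (Cst n))))"
  from eq have "plugS (depth (co_stk e)) (Body (map_tm depth (plugE r (co_args e)))) = plugS n (Body (Lam b))" by simp
  from plugS_Body_inj[OF this] have n: "n = depth (co_stk e)"
    and e2: "plugE (Lam b) [] = plugE (map_tm depth r) (map (map_tm depth) (co_args e))"
    by (auto simp: map_plugE)
  from plugE_inj[OF _ notApp_map[OF nA] e2] have
    h1: "Lam b = map_tm depth r" and h2: "[] = map (map_tm depth) (co_args e)"
    by (auto simp: notApp_def)
  from h1 obtain b0 where r: "r = Lam b0" and b: "b = map_tm depth b0" by (cases r) auto
  from h2 obtain s where e: "e = Stk s" by (cases e) auto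
  have "mstep (Cmd r e) (Cmd (subst b0 0 (Cst s)) (Stk (Cdr s)))" using L unfolding r e by (rule mstep.proj)
  moreover have "phi (Cmd (subst b0 0 (Cst s)) (Stk (Cdr s))) = y"
    using y n unfolding e by (simp add: map_subst b plugS_Suc)
  ultimately show ?thesis by blast
qed

lemma R: "mrb x y \<Longrightarrow> psi y = psi x \<or> irb (psi x) (psi y)"
proof (induction rule: mrb.induct)
  case (app v v' e) then show ?case by simp
next
  case (tp v) then show ?case by simp
next
  case (cdr v s)
  have L: "legal_top (plugS (depth s) (TLam (Body (map_tm depth v))))"
    using legal_phi[OF cdr] by (simp add: plugS_Suc)
  show ?case using irb.intros[OF L] by (simp add: plugS_Suc map_abstr[OF inj_depth])
qed

lemma mstar_sim: "mstep\<^sup>*\<^sup>* c d \<Longrightarrow> legal_cmd c \<Longrightarrow> istep\<^sup>*\<^sup>* (phi c) (phi d) \<and> legal_cmd d"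
proof (induction rule: rtranclp_induct)
  case (step y z)
  then show ?case using A1[OF step(2)] legal_step[OF step(2)]
    by (metis rtranclp.rtrancl_into_rtrancl)
qed simp

lemma mrb_sim: "mrb\<^sup>*\<^sup>* x y \<Longrightarrow> irb\<^sup>*\<^sup>* (psi x) (psi y)"
proof (induction rule: rtranclp_induct)
  case (step y z)
  then show ?case using R[OF step(2)] by (metis rtranclp.rtrancl_into_rtrancl)
qed simp

lemma mrb_exists_stk: "legal_cmd (Cmd v (Stk s)) \<Longrightarrow> \<exists>w. mrb\<^sup>*\<^sup>* (MCmd (Cmd v (Stk s))) (MTerm w)"
proof (induction s arbitrary: v)
  case Tp then show ?case using mrb.tp by blast
next
  case (Cdr s)
  have L: "legal_cmd (Cmd (Lam (abstr s 0 v)) (Stk s))"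
  proof -
    have "depth x < depth s" if "x \<in> csts v" "x \<noteq> s" for x
    proof -
      have "depth x < Suc (depth s)" using Cdr.prems that by (auto simp: stuck_less_def)
      moreover have "depth x \<noteq> depth s" using that inj_depth by (auto simp: inj_eq)
      ultimately show ?thesis by simp
    qed
    then show ?thesis by (auto simp: stuck_less_def)
  qed
  from Cdr.IH[OF L] obtain w where "mrb\<^sup>*\<^sup>* (MCmd (Cmd (Lam (abstr s 0 v)) (Stk s))) (MTerm w)" by blast
  then show ?case using mrb.cdr[OF Cdr.prems] by (meson converse_rtranclp_into_rtranclp)
qed

lemma mrb_exists: "legal_cmd (Cmd v e) \<Longrightarrow> \<exists>w. mrb\<^sup>*\<^sup>* (MCmd (Cmd v e)) (MTerm w)"
proof (induction e arbitrary: v)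
  case (Push v' e)
  have L: "legal_cmd (Cmd (App v v') e)" using Push.prems by auto
  from Push.IH[OF L] obtain w where "mrb\<^sup>*\<^sup>* (MCmd (Cmd (App v v') e)) (MTerm w)" by blast
  then show ?case using mrb.app[OF Push.prems] by (meson converse_rtranclp_into_rtranclp)
next
  case (Stk s) then show ?case using mrb_exists_stk by blast
qed

lemma irb_det: "irb x y \<Longrightarrow> irb x z \<Longrightarrow> y = z"
proof (induction rule: irb.induct)
  case (1 n v)
  from 1(2) show ?case
  proof (cases rule: irb.cases)
    case (1 m w)
    have "top_count (plugS n (TLam (Body v))) = top_count (plugS m (TLam (Body w)))"
      "top_body (plugS n (TLam (Body v))) = top_body (plugS m (TLam (Body w)))"
      using 1 by auto
    then have "n = m" "v = w" by simp_all
    then show ?thesis using 1 by simp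
  qed
qed

lemma irb_Body: "\<not> irb (Body a) y"
proof
  assume "irb (Body a) y"
  then show False
  proof (cases rule: irb.cases)
    case (1 n v)
    then have "top_count (Body a) = top_count (plugS n (TLam (Body v)))" by simp
    then show False by simp
  qed
qed

lemma irb_unique: "irb\<^sup>*\<^sup>* x (Body a) \<Longrightarrow> irb\<^sup>*\<^sup>* x (Body b) \<Longrightarrow> a = b"
proof (induction arbitrary: b rule: converse_rtranclp_induct)
  case base
  then show ?case by (cases rule: converse_rtranclpE) (auto simp: irb_Body)
next
  case (step x y)
  from step.prems show ?case
  proof (cases rule: converse_rtranclpE)
    case base then show ?thesis using step(1) irb_Body by simp
  next
    case (step y')
    have "y' = y" using irb_det[OF step(1) \<open>irb x y\<close>] .
    then show ?thesis using step(2) \<open>\<And>b. irb\<^sup>*\<^sup>* y (Body b) \<Longrightarrow> a = b\<close> by blast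
  qed
qed

lemma istar_back: "istep\<^sup>*\<^sup>* x t \<Longrightarrow> legal_cmd c \<Longrightarrow> phi c = x \<Longrightarrow>
  \<exists>c'. mstep\<^sup>*\<^sup>* c c' \<and> phi c' = t \<and> legal_cmd c'"
proof (induction arbitrary: c rule: converse_rtranclp_induct)
  case base then show ?case by blast
next
  case (step x y)
  obtain r e where c: "c = Cmd r e" by (cases c)
  have "legal_cmd (Cmd r e)" using step.prems c by simp
  from Norm[OF this] obtain r' e' where
    n0: "mstep\<^sup>*\<^sup>* (Cmd r e) (Cmd r' e')" "phi (Cmd r' e') = phi (Cmd r e)" "legal_cmd (Cmd r' e')" "notApp r'"
    by blast
  have n: "mstep\<^sup>*\<^sup>* c (Cmd r' e')" "phi (Cmd r' e') = x" "legal_cmd (Cmd r' e')" "notApp r'"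
    using n0 step.prems c by simp_all
  have "istep (phi (Cmd r' e')) y" using step(1) n(2) by simp
  from Inv[OF n(3) n(4) this] obtain c2 where c2: "mstep (Cmd r' e') c2" "phi c2 = y" by blast
  from step.IH[OF legal_step[OF c2(1)] c2(2)] obtain c' where
    "mstep\<^sup>*\<^sup>* c2 c'" "phi c' = t" "legal_cmd c'" by blast
  moreover have "mstep\<^sup>*\<^sup>* c c2" using n(1) c2(1) by (rule rtranclp.rtrancl_into_rtrancl)
  ultimately show ?case using rtranclp_trans by metis
qed

theorem theorem3:
  fixes v v' :: lam
  shows "(\<exists>t. istep\<^sup>*\<^sup>* (Body (emb v)) t \<and> \<not> (\<exists>t'. istep t t') \<and> irb\<^sup>*\<^sup>* t (Body (emb v')))
     \<longleftrightarrow> (\<exists>c. mstep\<^sup>*\<^sup>* (Cmd (emb v) (Stk Tp)) c \<and> \<not> (\<exists>c'. mstep c c')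
              \<and> mrb\<^sup>*\<^sup>* (MCmd c) (MTerm (emb v')))"
proof
  have L0: "legal_cmd (Cmd (emb v) (Stk Tp))" by simp
  have P0: "phi (Cmd (emb v) (Stk Tp)) = Body (emb v)" by simp
  assume "\<exists>t. istep\<^sup>*\<^sup>* (Body (emb v)) t \<and> \<not> (\<exists>t'. istep t t') \<and> irb\<^sup>*\<^sup>* t (Body (emb v'))"
  then obtain t where t: "istep\<^sup>*\<^sup>* (Body (emb v)) t" "\<not> (\<exists>t'. istep t t')" "irb\<^sup>*\<^sup>* t (Body (emb v'))"
    by blast
  from istar_back[OF t(1) L0 P0] obtain c where
    c: "mstep\<^sup>*\<^sup>* (Cmd (emb v) (Stk Tp)) c" "phi c = t" "legal_cmd c" by blast
  obtain r e where ce: "c = Cmd r e" by (cases c)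
  from Norm[of r e] c ce obtain r' e' where
    n: "mstep\<^sup>*\<^sup>* c (Cmd r' e')" "phi (Cmd r' e') = t" "legal_cmd (Cmd r' e')" "notApp r'" by auto
  have irr: "\<not> (\<exists>d. mstep (Cmd r' e') d)"
    using A2 n(2,4) t(2) by blast
  from mrb_exists[OF n(3)] obtain w where w: "mrb\<^sup>*\<^sup>* (MCmd (Cmd r' e')) (MTerm w)" by blast
  from mrb_sim[OF w] n(2) have "irb\<^sup>*\<^sup>* t (Body (map_tm depth w))" by simp
  from irb_unique[OF this t(3)] have "map_tm depth w = map_tm depth (emb v')" by simp
  then have "w = emb v'" using tm.inj_map[OF inj_depth] by (metis injD map_emb)
  then show "\<exists>c. mstep\<^sup>*\<^sup>* (Cmd (emb v) (Stk Tp)) c \<and> \<not> (\<exists>c'. mstep c c')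
              \<and> mrb\<^sup>*\<^sup>* (MCmd c) (MTerm (emb v'))"
    using c(1) n(1) irr w by (meson rtranclp_trans)
next
  assume "\<exists>c. mstep\<^sup>*\<^sup>* (Cmd (emb v) (Stk Tp)) c \<and> \<not> (\<exists>c'. mstep c c')
              \<and> mrb\<^sup>*\<^sup>* (MCmd c) (MTerm (emb v'))"
  then obtain c where c: "mstep\<^sup>*\<^sup>* (Cmd (emb v) (Stk Tp)) c" "\<not> (\<exists>c'. mstep c c')"
    "mrb\<^sup>*\<^sup>* (MCmd c) (MTerm (emb v'))" by blast
  from mstar_sim[OF c(1)] have s: "istep\<^sup>*\<^sup>* (Body (emb v)) (phi c)" and L: "legal_cmd c" by auto
  obtain r e where ce: "c = Cmd r e" by (cases c)
  have nA: "notApp r"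
    unfolding notApp_def
  proof (intro allI notI)
    fix a b assume "r = App a b"
    then have "mstep c (Cmd a (Push b e))" using L ce mstep.push by auto
    then show False using c(2) by blast
  qed
  have irr: "\<not> (\<exists>t'. istep (phi c) t')"
    using Inv[OF _ nA] L ce c(2) by blast
  from mrb_sim[OF c(3)] have "irb\<^sup>*\<^sup>* (phi c) (Body (emb v'))" by simp
  then show "\<exists>t. istep\<^sup>*\<^sup>* (Body (emb v)) t \<and> \<not> (\<exists>t'. istep t t') \<and> irb\<^sup>*\<^sup>* t (Body (emb v'))"
    using s irr by blast
qed

end
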